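(* Let $\mathcal{S}=\{(\bm{x}_i,y_i): i\in[m]\}$ be any sample with $\bm{x}_i\in\mathbb{R}^d$ and $y_i\in\{-1,1\}$, and let $h(\bm{x})=\langle\bm{\theta},\bm{x}\rangle$ be any linear hypothesis ($\bm{\theta}\in\mathbb{R}^d$). Let $l:\mathbb{R}\to\mathbb{R}$ be a loss such that $l_o(x):=(l(x)-l(-x))/2$ is linear. Then $$R_{\mathcal{S},l}(h)=\frac{1}{2}\cdot\frac{1}{m}\sum_{i=1}^m\sum_{\sigma\in\{-1,1\}} l(\sigma h(\bm{x}_i)) + l_o\big(h(\bm{\mu}_{\mathcal{S}})\big).$$
   Context: The empirical $l$-risk is $R_{\mathcal{S},l}(h)=\frac{1}{m}\sum_{i=1}^m l(y_i h(\bm{x}_i))$. The mean operator of $\mathcal{S}$ is $\bm{\mu}_{\mathcal{S}}=\frac{1}{m}\sum_{i=1}^m y_i\bm{x}_i$. *)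

theory Defs
  imports "HOL-Analysis.Analysis"
begin

definition emp_risk :: "nat \<Rightarrow> (nat \<Rightarrow> real ^ 'd) \<Rightarrow> (nat \<Rightarrow> real)
    \<Rightarrow> (real \<Rightarrow> real) \<Rightarrow> (real ^ 'd \<Rightarrow> real) \<Rightarrow> real" where
  "emp_risk m x y l h = (1 / real m) * (\<Sum>i=1..m. l (y i * h (x i)))"

definition mean_op :: "nat \<Rightarrow> (nat \<Rightarrow> real ^ 'd) \<Rightarrow> (nat \<Rightarrow> real) \<Rightarrow> real ^ 'd" where
  "mean_op m x y = (1 / real m) *\<^sub>R (\<Sum>i=1..m. y i *\<^sub>R x i)"

definition odd_part :: "(real \<Rightarrow> real) \<Rightarrow> real \<Rightarrow> real" where
  "odd_part l t = (l t - l (- t)) / 2"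

end

theory Submission
  imports Defs
begin

theorem theorem3:
  fixes m :: nat and x :: "nat \<Rightarrow> real ^ 'd" and y :: "nat \<Rightarrow> real"
    and \<theta> :: "real ^ 'd" and l :: "real \<Rightarrow> real"
  assumes labels: "\<forall>i\<in>{1..m}. y i \<in> {-1, 1}"
    and lin: "linear (odd_part l)"
  shows "emp_risk m x y l (\<lambda>v. \<theta> \<bullet> v)
       = (1/2) * ((1 / real m) * (\<Sum>i=1..m. \<Sum>\<sigma>\<in>{-1, 1::real}. l (\<sigma> * (\<theta> \<bullet> x i))))
         + odd_part l (\<theta> \<bullet> mean_op m x y)"
proof -
  have sc: "odd_part l (a * b) = a * odd_part l b" for a b
    using linear_scale[OF lin, of a b] by simp
  have sm: "odd_part l (\<Sum>i=1..m. f i) = (\<Sum>i=1..m. odd_part l (f i))" for f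
    using linear_sum[OF lin] by blast
  have mu: "\<theta> \<bullet> mean_op m x y = (1 / real m) * (\<Sum>i=1..m. y i * (\<theta> \<bullet> x i))"
    unfolding mean_op_def by (simp add: inner_sum_right)
  have op: "odd_part l (\<theta> \<bullet> mean_op m x y) = (1 / real m) * (\<Sum>i=1..m. y i * odd_part l (\<theta> \<bullet> x i))"
    unfolding mu sc sm by simp
  have tm: "l (y i * (\<theta> \<bullet> x i)) = (1/2) * (\<Sum>\<sigma>\<in>{-1, 1::real}. l (\<sigma> * (\<theta> \<bullet> x i))) + y i * odd_part l (\<theta> \<bullet> x i)"
    if "i \<in> {1..m}" for i
  proof -
    have "y i = -1 \<or> y i = 1" using labels that by auto
    then show ?thesis by (auto simp: odd_part_def field_simps)
  qed
  have "(\<Sum>i=1..m. l (y i * (\<theta> \<bullet> x i))) = (\<Sum>i=1..m. (1/2) * (\<Sum>\<sigma>\<in>{-1, 1::real}. l (\<sigma> * (\<theta> \<bullet> x i))) + y i * odd_part l (\<theta> \<bullet> x i))"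
    using tm by (rule sum.cong[OF refl])
  also have "\<dots> = (1/2) * (\<Sum>i=1..m. \<Sum>\<sigma>\<in>{-1, 1::real}. l (\<sigma> * (\<theta> \<bullet> x i))) + (\<Sum>i=1..m. y i * odd_part l (\<theta> \<bullet> x i))"
    by (simp add: sum.distrib sum_distrib_left del: sum.insert)
  finally show ?thesis unfolding emp_risk_def op by (simp add: algebra_simps)
qed

end
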